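(* The functor $G:\mathbf{cMet}_1\to\mathrm{ER}(\mathbf U)$, $G(X,d)=(X,d)$, $G(f)=[(x,y)\mapsto d(f(x),y)]$, is full and faithful. In particular, for complete metric spaces $(X,d_X),(Y,d_Y)$ of diameter at most 1 and every functional relation $F:(X,d_X)\to(Y,d_Y)$ in $\mathrm{ER}(\mathbf U)$ there is a unique uniformly continuous $f:X\to Y$ with $[F]=G(f)$.
   Context: $\mathbf{cMet}_1$: complete metric spaces with all distances $\le 1$ and uniformly continuous maps. For functions $\alpha,\beta:Z\to[0,1]$ write $\alpha\sqsubseteq\beta$ if for every $\varepsilon>0$ there exists $\delta>0$ such that for all $z\in Z$, $\alpha(z)\le\delta$ implies $\beta(z)\le\varepsilon$. The category $\mathrm{ER}(\mathbf U)$: objects are pairs $(X,R)$ with $X$ a set and $R:X\times X\to[0,1]$ such that $R(x,x)=0$ for all $x$, $R(x,y)\sqsubseteq R(y,x)$ as functions of $(x,y)$, and $\max(R(x,y),R(y,z))\sqsubseteq R(x,z)$ as functions of $(x,y,z)$. A functional relation $(X,R)\to(Y,S)$ is a function $F:X\times Y\to[0,1]$ with $\max(F(x,y),R(x,x'),S(y,y'))\sqsubseteq F(x',y')$ as functions of $(x,x',y,y')$, $\max(F(x,y),F(x,y'))\sqsubseteq S(y,y')$ as functions of $(x,y,y')$, and $\inf_{y\in Y}F(x,y)=0$ for all $x$. Morphisms are equivalence classes $[F]$ of functional relations, with $F\sim F'$ iff $F\sqsubseteq F'$ as functions on $X\times Y$; identity $[R]$; composite of $[F]$ and $[H]$ is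 $[(x,z)\mapsto\inf_y\max(F(x,y),H(y,z))]$. *)

theory Defs
  imports "HOL-Analysis.Analysis"
begin

definition approx_le :: "'z set \<Rightarrow> ('z \<Rightarrow> real) \<Rightarrow> ('z \<Rightarrow> real) \<Rightarrow> bool" where
  "approx_le Z \<alpha> \<beta> \<longleftrightarrow>
     (\<forall>\<epsilon>>0. \<exists>\<delta>>0. \<forall>z\<in>Z. \<alpha> z \<le> \<delta> \<longrightarrow> \<beta> z \<le> \<epsilon>)"

definition ER_obj :: "'a set \<Rightarrow> ('a \<Rightarrow> 'a \<Rightarrow> real) \<Rightarrow> bool" where
  "ER_obj X R \<longleftrightarrow>
     (\<forall>x\<in>X. \<forall>y\<in>X. 0 \<le> R x y \<and> R x y \<le> 1) \<and>
     (\<forall>x\<in>X. R x x = 0) \<and>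
     approx_le (X \<times> X) (\<lambda>(x,y). R x y) (\<lambda>(x,y). R y x) \<and>
     approx_le (X \<times> X \<times> X) (\<lambda>(x,y,z). max (R x y) (R y z)) (\<lambda>(x,y,z). R x z)"

text \<open>Functional relations (X,R) -> (Y,S). The condition inf_{y in Y} F(x,y) = 0
  (for [0,1]-valued F) is written out literally as: for every eps>0 some y in Y
  has F(x,y) < eps.\<close>
definition functional_rel ::
  "'a set \<Rightarrow> ('a \<Rightarrow> 'a \<Rightarrow> real) \<Rightarrow> 'b set \<Rightarrow> ('b \<Rightarrow> 'b \<Rightarrow> real) \<Rightarrow> ('a \<Rightarrow> 'b \<Rightarrow> real) \<Rightarrow> bool" where
  "functional_rel X R Y S F \<longleftrightarrow>
     (\<forall>x\<in>X. \<forall>y\<in>Y. 0 \<le> F x y \<and> F x y \<le> 1) \<and>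
     approx_le (X \<times> X \<times> Y \<times> Y) (\<lambda>(x,x',y,y'). max (F x y) (max (R x x') (S y y')))
                                   (\<lambda>(x,x',y,y'). F x' y') \<and>
     approx_le (X \<times> Y \<times> Y) (\<lambda>(x,y,y'). max (F x y) (F x y')) (\<lambda>(x,y,y'). S y y') \<and>
     (\<forall>x\<in>X. \<forall>\<epsilon>>0. \<exists>y\<in>Y. F x y < \<epsilon>)"

definition fr_equiv :: "'a set \<Rightarrow> 'b set \<Rightarrow> ('a \<Rightarrow> 'b \<Rightarrow> real) \<Rightarrow> ('a \<Rightarrow> 'b \<Rightarrow> real) \<Rightarrow> bool" where
  "fr_equiv X Y F F' \<longleftrightarrow> approx_le (X \<times> Y) (\<lambda>(x,y). F x y) (\<lambda>(x,y). F' x y)"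

definition G_map :: "('b \<Rightarrow> 'b \<Rightarrow> real) \<Rightarrow> ('a \<Rightarrow> 'b) \<Rightarrow> ('a \<Rightarrow> 'b \<Rightarrow> real)" where
  "G_map dY f = (\<lambda>x y. dY (f x) y)"

definition cMet1 :: "'a set \<Rightarrow> ('a \<Rightarrow> 'a \<Rightarrow> real) \<Rightarrow> bool" where
  "cMet1 X d \<longleftrightarrow> Metric_space X d \<and> Metric_space.mcomplete X d \<and>
                  (\<forall>x\<in>X. \<forall>y\<in>X. d x y \<le> 1)"

end

theory Submission
  imports Defs
begin

lemma approx_unpack2:
  assumes "approx_le (A \<times> B) (\<lambda>(x,y). p x y) (\<lambda>(x,y). q x y)"
  shows "\<forall>\<epsilon>>0. \<exists>\<delta>>0. \<forall>x\<in>A. \<forall>y\<in>B. p x y \<le> \<delta> \<longrightarrow> q x y \<le> \<epsilon>"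
  using assms unfolding approx_le_def by fastforce

lemma approx_unpack3:
  assumes "approx_le (A \<times> B \<times> C) (\<lambda>(x,y,z). p x y z) (\<lambda>(x,y,z). q x y z)"
  shows "\<forall>\<epsilon>>0. \<exists>\<delta>>0. \<forall>x\<in>A. \<forall>y\<in>B. \<forall>z\<in>C. p x y z \<le> \<delta> \<longrightarrow> q x y z \<le> \<epsilon>"
  using assms unfolding approx_le_def by fastforce

lemma approx_unpack4:
  assumes "approx_le (A \<times> B \<times> C \<times> D) (\<lambda>(x,y,z,w). p x y z w) (\<lambda>(x,y,z,w). q x y z w)"
  shows "\<forall>\<epsilon>>0. \<exists>\<delta>>0. \<forall>x\<in>A. \<forall>y\<in>B. \<forall>z\<in>C. \<forall>w\<in>D. p x y z w \<le> \<delta> \<longrightarrow> q x y z w \<le> \<epsilon>"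
  using assms unfolding approx_le_def by fastforce

lemma approx_pack2:
  assumes "\<forall>\<epsilon>>0. \<exists>\<delta>>0. \<forall>x\<in>A. \<forall>y\<in>B. p x y \<le> \<delta> \<longrightarrow> q x y \<le> \<epsilon>"
  shows "approx_le (A \<times> B) (\<lambda>(x,y). p x y) (\<lambda>(x,y). q x y)"
  using assms unfolding approx_le_def by fastforce


theorem mainTheorem9:
  fixes X :: "'a set" and dX :: "'a \<Rightarrow> 'a \<Rightarrow> real"
    and Y :: "'b set" and dY :: "'b \<Rightarrow> 'b \<Rightarrow> real"
    and F :: "'a \<Rightarrow> 'b \<Rightarrow> real"
  assumes "cMet1 X dX" and "cMet1 Y dY"
    and "functional_rel X dX Y dY F"
  shows "(\<exists>f. uniformly_continuous_map (metric (X, dX)) (metric (Y, dY)) f \<and>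
              fr_equiv X Y F (G_map dY f))
       \<and> (\<forall>f g. uniformly_continuous_map (metric (X, dX)) (metric (Y, dY)) f \<and>
                uniformly_continuous_map (metric (X, dX)) (metric (Y, dY)) g \<and>
                fr_equiv X Y (G_map dY f) (G_map dY g) \<longrightarrow> (\<forall>x\<in>X. f x = g x))
       \<and> (\<forall>f g. uniformly_continuous_map (metric (X, dX)) (metric (Y, dY)) f \<and>
                uniformly_continuous_map (metric (X, dX)) (metric (Y, dY)) g \<and>
                fr_equiv X Y F (G_map dY f) \<and> fr_equiv X Y F (G_map dY g)
                \<longrightarrow> (\<forall>x\<in>X. f x = g x))"
proof -
  interpret MX: Metric_space X dX using assms(1) by (simp add: cMet1_def)
  interpret MY: Metric_space Y dY using assms(2) by (simp add: cMet1_def)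
  have compl: "MY.mcomplete" using assms(2) by (simp add: cMet1_def)
  have C1: "\<forall>\<epsilon>>0. \<exists>\<delta>>0. \<forall>x\<in>X. \<forall>x'\<in>X. \<forall>y\<in>Y. \<forall>y'\<in>Y.
      max (F x y) (max (dX x x') (dY y y')) \<le> \<delta> \<longrightarrow> F x' y' \<le> \<epsilon>"
    using assms(3) unfolding functional_rel_def
    by (intro approx_unpack4[where p="\<lambda>x x' y y'. max (F x y) (max (dX x x') (dY y y'))"
          and q="\<lambda>x x' y y'. F x' y'"]) simp
  have C2: "\<forall>\<epsilon>>0. \<exists>\<delta>>0. \<forall>x\<in>X. \<forall>y\<in>Y. \<forall>y'\<in>Y.
      max (F x y) (F x y') \<le> \<delta> \<longrightarrow> dY y y' \<le> \<epsilon>"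
    using assms(3) unfolding functional_rel_def
    by (intro approx_unpack3[where p="\<lambda>x y y'. max (F x y) (F x y')"
          and q="\<lambda>x y y'. dY y y'"]) simp
  have C3: "\<forall>x\<in>X. \<forall>\<epsilon>>0. \<exists>y\<in>Y. F x y < \<epsilon>"
    using assms(3) unfolding functional_rel_def by blast
  define Q where "Q x z \<longleftrightarrow> z \<in> Y \<and> (\<forall>\<epsilon>>0. \<exists>\<eta>>0. \<forall>y\<in>Y. F x y < \<eta> \<longrightarrow> dY z y \<le> \<epsilon>)" for x z
  have exQ: "\<exists>z. Q x z" if x: "x \<in> X" for x
  proof -
    have "\<forall>n::nat. \<exists>y\<in>Y. F x y < 1 / (real n + 1)"
      using C3 x by simp
    then obtain s where s: "\<And>n. s n \<in> Y" "\<And>n. F x (s n) < 1 / (real n + 1)"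
      by metis
    have small: "\<exists>N. \<forall>n\<ge>N. F x (s n) < \<eta>" if "\<eta> > 0" for \<eta>
    proof -
      obtain N::nat where N: "1 / \<eta> < real N" using reals_Archimedean2 by blast
      have "\<forall>n\<ge>N. F x (s n) < \<eta>"
      proof (intro allI impI)
        fix n assume "N \<le> n"
        then have "1 / \<eta> < real n + 1" using N by linarith
        then have "1 / (real n + 1) < \<eta>" using \<open>\<eta> > 0\<close>
          by (simp add: divide_less_eq field_simps)
        then show "F x (s n) < \<eta>" using s(2)[of n] by linarith
      qed
      then show ?thesis by blast
    qed
    have "MY.MCauchy s"
      unfolding MY.MCauchy_def
    proof (intro conjI allI impI)
      show "range s \<subseteq> Y" using s by auto
      fix \<epsilon>::real assume "\<epsilon> > 0"
      then obtain \<delta> where d: "\<delta> > 0" "\<forall>x\<in>X. \<forall>y\<in>Y. \<forall>y'\<in>Y.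
          max (F x y) (F x y') \<le> \<delta> \<longrightarrow> dY y y' \<le> \<epsilon>/2"
        using C2 half_gt_zero by blast
      obtain N where N: "\<forall>n\<ge>N. F x (s n) < \<delta>" using small d(1) by blast
      show "\<exists>N. \<forall>n n'. N \<le> n \<longrightarrow> N \<le> n' \<longrightarrow> dY (s n) (s n') < \<epsilon>"
      proof (intro exI allI impI)
        fix n n' assume "N \<le> n" "N \<le> n'"
        then have "max (F x (s n)) (F x (s n')) \<le> \<delta>" using N by (simp add: less_imp_le)
        then have "dY (s n) (s n') \<le> \<epsilon>/2" using d(2) x s(1) by blast
        then show "dY (s n) (s n') < \<epsilon>" using \<open>\<epsilon> > 0\<close> by linarith
      qed
    qed
    then obtain z where "limitin MY.mtopology s z sequentially"
      using compl MY.mcomplete_def by blast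
    then have zz: "z \<in> Y \<and> (\<forall>\<epsilon>>0. \<exists>N. \<forall>n\<ge>N. s n \<in> Y \<and> dY (s n) z < \<epsilon>)"
      unfolding MY.limit_metric_sequentially .
    have z: "z \<in> Y" "\<And>\<epsilon>. \<epsilon> > 0 \<Longrightarrow> \<exists>N. \<forall>n\<ge>N. dY (s n) z < \<epsilon>"
    proof -
      show "z \<in> Y" using zz by simp
      fix \<epsilon>::real assume "\<epsilon> > 0"
      then obtain N where "\<forall>n\<ge>N. s n \<in> Y \<and> dY (s n) z < \<epsilon>" using zz by blast
      then show "\<exists>N. \<forall>n\<ge>N. dY (s n) z < \<epsilon>" by blast
    qed
    have "Q x z"
      unfolding Q_def
    proof (intro conjI allI impI z(1))
      fix \<epsilon>::real assume "\<epsilon> > 0"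
      then obtain \<delta> where d: "\<delta> > 0" "\<forall>x\<in>X. \<forall>y\<in>Y. \<forall>y'\<in>Y.
          max (F x y) (F x y') \<le> \<delta> \<longrightarrow> dY y y' \<le> \<epsilon>/2"
        using C2 half_gt_zero by blast
      show "\<exists>\<eta>>0. \<forall>y\<in>Y. F x y < \<eta> \<longrightarrow> dY z y \<le> \<epsilon>"
      proof (intro exI conjI ballI impI)
        show "\<delta> > 0" by fact
        fix y assume y: "y \<in> Y" "F x y < \<delta>"
        obtain N1 where N1: "\<forall>n\<ge>N1. F x (s n) < \<delta>" using small d(1) by blast
        obtain N2 where N2: "\<forall>n\<ge>N2. dY (s n) z < \<epsilon>/2" using z(2)[of "\<epsilon>/2"] \<open>\<epsilon> > 0\<close> by auto
        define n where "n = max N1 N2"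
        have "F x (s n) < \<delta>" using N1 n_def by simp
        then have "max (F x (s n)) (F x y) \<le> \<delta>" using y(2) by simp
        then have a: "dY (s n) y \<le> \<epsilon>/2" using d(2) x s(1) y(1) by blast
        have b: "dY (s n) z < \<epsilon>/2" using N2 n_def by simp
        have "dY z y \<le> dY z (s n) + dY (s n) y" using MY.triangle z(1) s(1) y(1) by blast
        then show "dY z y \<le> \<epsilon>" using a b MY.commute[of z "s n"] by linarith
      qed
    qed
    then show ?thesis by blast
  qed
  define f where "f x = (SOME z. Q x z)" for x
  have Qf: "Q x (f x)" if "x \<in> X" for x
    using exQ[OF that] unfolding f_def by (rule someI_ex)
  have fY: "f x \<in> Y" if "x \<in> X" for x using Qf[OF that] Q_def by blast
  have L: "\<exists>\<delta>>0. \<forall>x\<in>X. \<forall>y\<in>Y. F x y \<le> \<delta> \<longrightarrow> dY (f x) y \<le> \<epsilon>" if "\<epsilon> > 0" for \<epsilon>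
  proof -
    have "\<epsilon>/2 > 0" using that by simp
    then obtain \<delta> where d: "\<delta> > 0" "\<forall>x\<in>X. \<forall>y\<in>Y. \<forall>y'\<in>Y.
        max (F x y) (F x y') \<le> \<delta> \<longrightarrow> dY y y' \<le> \<epsilon>/2"
      using C2 by blast
    show ?thesis
    proof (intro exI conjI ballI impI)
      show "\<delta> > 0" by fact
      fix x y assume x: "x \<in> X" and y: "y \<in> Y" and Fy: "F x y \<le> \<delta>"
      have e2: "\<epsilon>/2 > 0" using \<open>\<epsilon> > 0\<close> by simp
      obtain \<eta> where e: "\<eta> > 0" "\<forall>y\<in>Y. F x y < \<eta> \<longrightarrow> dY (f x) y \<le> \<epsilon>/2"
        using Qf[OF x] e2 unfolding Q_def by blast
      have "min \<eta> \<delta> > 0" using e(1) d(1) by simp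
      then obtain y' where y': "y' \<in> Y" "F x y' < min \<eta> \<delta>"
        using C3 x by blast
      have a: "dY (f x) y' \<le> \<epsilon>/2" using e(2) y' by simp
      have "max (F x y) (F x y') \<le> \<delta>" using Fy y'(2) by simp
      then have b: "dY y y' \<le> \<epsilon>/2" using d(2) x y y'(1) by blast
      have "dY (f x) y \<le> dY (f x) y' + dY y' y" using MY.triangle fY[OF x] y y' by blast
      then show "dY (f x) y \<le> \<epsilon>" using a b MY.commute[of y y'] by linarith
    qed
  qed
  have part1: "uniformly_continuous_map (metric (X, dX)) (metric (Y, dY)) f \<and>
              fr_equiv X Y F (G_map dY f)"
  proof
    have Lall: "\<forall>\<epsilon>>0. \<exists>\<delta>>0. \<forall>x\<in>X. \<forall>y\<in>Y. F x y \<le> \<delta> \<longrightarrow> dY (f x) y \<le> \<epsilon>"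
      using L by blast
    show "fr_equiv X Y F (G_map dY f)"
      unfolding fr_equiv_def G_map_def
      using approx_pack2[OF Lall] by simp
    show "uniformly_continuous_map (metric (X, dX)) (metric (Y, dY)) f"
      unfolding uniformly_continuous_map_def MX.mspace_metric MY.mspace_metric
        MX.mdist_metric MY.mdist_metric
    proof (intro conjI allI impI)
      show "f \<in> X \<rightarrow> Y" using fY by blast
      fix \<epsilon>::real assume "\<epsilon> > 0"
      then have e3: "\<epsilon>/3 > 0" by simp
      obtain \<eta> where e: "\<eta> > 0" "\<forall>x\<in>X. \<forall>y\<in>Y. F x y \<le> \<eta> \<longrightarrow> dY (f x) y \<le> \<epsilon>/3"
        using L[OF e3] by blast
      obtain \<delta> where d: "\<delta> > 0" "\<forall>x\<in>X. \<forall>x'\<in>X. \<forall>y\<in>Y. \<forall>y'\<in>Y.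
          max (F x y) (max (dX x x') (dY y y')) \<le> \<delta> \<longrightarrow> F x' y' \<le> \<eta>"
        using C1 e(1) by blast
      show "\<exists>\<delta>>0. \<forall>x\<in>X. \<forall>y\<in>X. dX y x < \<delta> \<longrightarrow> dY (f y) (f x) < \<epsilon>"
      proof (intro exI conjI ballI impI)
        show "\<delta> > 0" by fact
        fix x x' assume x: "x \<in> X" and x': "x' \<in> X" and dx: "dX x' x < \<delta>"
        have "min \<eta> \<delta> > 0" using e(1) d(1) by simp
        then obtain y where y: "y \<in> Y" "F x' y < min \<eta> \<delta>"
          using C3 x' by blast
        have "F x' y \<le> \<eta>" using y(2) by simp
        then have a: "dY (f x') y \<le> \<epsilon>/3" using e(2) x' y(1) by blast
        have "max (F x' y) (max (dX x' x) (dY y y)) \<le> \<delta>"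
          using y(2) dx MY.zero[of y y] y(1) by simp
        then have "F x y \<le> \<eta>" using d(2)[rule_format, OF x' x y(1) y(1)] by blast
        then have b: "dY (f x) y \<le> \<epsilon>/3" using e(2) x y(1) by blast
        have "dY (f x') (f x) \<le> dY (f x') y + dY y (f x)"
          using MY.triangle[OF fY[OF x'] y(1) fY[OF x]] .
        then show "dY (f x') (f x) < \<epsilon>" using a b MY.commute[of y "f x"] \<open>\<epsilon>>0\<close> by linarith
      qed
    qed
  qed
  have ucY: "h x \<in> Y" if "uniformly_continuous_map (metric (X, dX)) (metric (Y, dY)) h" "x \<in> X" for h x
    using that unfolding uniformly_continuous_map_def MX.mspace_metric MY.mspace_metric by blast
  have zero_le: "a = b" if "a \<in> Y" "b \<in> Y" "\<And>\<epsilon>. \<epsilon> > 0 \<Longrightarrow> dY a b \<le> \<epsilon>" for a b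
  proof -
    have "dY a b \<le> 0"
      using that(3) by (meson dense_ge)
    then show ?thesis using MY.zero[OF that(1,2)] MY.nonneg[of a b] by linarith
  qed
  have part2: "\<forall>f g. uniformly_continuous_map (metric (X, dX)) (metric (Y, dY)) f \<and>
                uniformly_continuous_map (metric (X, dX)) (metric (Y, dY)) g \<and>
                fr_equiv X Y (G_map dY f) (G_map dY g) \<longrightarrow> (\<forall>x\<in>X. f x = g x)"
  proof (intro allI impI ballI)
    fix f g x
    assume H: "uniformly_continuous_map (metric (X, dX)) (metric (Y, dY)) f \<and>
                uniformly_continuous_map (metric (X, dX)) (metric (Y, dY)) g \<and>
                fr_equiv X Y (G_map dY f) (G_map dY g)" and x: "x \<in> X"
    have fx: "f x \<in> Y" and gx: "g x \<in> Y" using H ucY x by blast+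
    have E: "\<forall>\<epsilon>>0. \<exists>\<delta>>0. \<forall>x\<in>X. \<forall>y\<in>Y. dY (f x) y \<le> \<delta> \<longrightarrow> dY (g x) y \<le> \<epsilon>"
      using H unfolding fr_equiv_def G_map_def
      by (intro approx_unpack2[where p="\<lambda>x y. dY (f x) y" and q="\<lambda>x y. dY (g x) y"]) simp
    have "dY (g x) (f x) \<le> \<epsilon>" if "\<epsilon> > 0" for \<epsilon>
    proof -
      obtain \<delta> where "\<delta> > 0" "\<forall>x\<in>X. \<forall>y\<in>Y. dY (f x) y \<le> \<delta> \<longrightarrow> dY (g x) y \<le> \<epsilon>"
        using E \<open>\<epsilon> > 0\<close> by blast
      then show ?thesis using x fx MY.zero[of "f x" "f x"] by auto
    qed
    then show "f x = g x" using zero_le[OF gx fx] by simp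
  qed
  have part3: "\<forall>f g. uniformly_continuous_map (metric (X, dX)) (metric (Y, dY)) f \<and>
                uniformly_continuous_map (metric (X, dX)) (metric (Y, dY)) g \<and>
                fr_equiv X Y F (G_map dY f) \<and> fr_equiv X Y F (G_map dY g)
                \<longrightarrow> (\<forall>x\<in>X. f x = g x)"
  proof (intro allI impI ballI)
    fix f g x
    assume H: "uniformly_continuous_map (metric (X, dX)) (metric (Y, dY)) f \<and>
                uniformly_continuous_map (metric (X, dX)) (metric (Y, dY)) g \<and>
                fr_equiv X Y F (G_map dY f) \<and> fr_equiv X Y F (G_map dY g)" and x: "x \<in> X"
    have fx: "f x \<in> Y" and gx: "g x \<in> Y" using H ucY x by blast+
    have Ef: "\<forall>\<epsilon>>0. \<exists>\<delta>>0. \<forall>x\<in>X. \<forall>y\<in>Y. F x y \<le> \<delta> \<longrightarrow> dY (f x) y \<le> \<epsilon>"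
      using H unfolding fr_equiv_def G_map_def
      by (intro approx_unpack2[where p="F" and q="\<lambda>x y. dY (f x) y"]) simp
    have Eg: "\<forall>\<epsilon>>0. \<exists>\<delta>>0. \<forall>x\<in>X. \<forall>y\<in>Y. F x y \<le> \<delta> \<longrightarrow> dY (g x) y \<le> \<epsilon>"
      using H unfolding fr_equiv_def G_map_def
      by (intro approx_unpack2[where p="F" and q="\<lambda>x y. dY (g x) y"]) simp
    have "dY (f x) (g x) \<le> \<epsilon>" if "\<epsilon> > 0" for \<epsilon>
    proof -
      have e2: "\<epsilon>/2 > 0" using that by simp
      obtain \<delta>1 where d1: "\<delta>1 > 0" "\<forall>x\<in>X. \<forall>y\<in>Y. F x y \<le> \<delta>1 \<longrightarrow> dY (f x) y \<le> \<epsilon>/2"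
        using Ef e2 by blast
      obtain \<delta>2 where d2: "\<delta>2 > 0" "\<forall>x\<in>X. \<forall>y\<in>Y. F x y \<le> \<delta>2 \<longrightarrow> dY (g x) y \<le> \<epsilon>/2"
        using Eg e2 by blast
      have "min \<delta>1 \<delta>2 > 0" using d1(1) d2(1) by simp
      then obtain y where y: "y \<in> Y" "F x y < min \<delta>1 \<delta>2"
        using C3 x by blast
      have a: "dY (f x) y \<le> \<epsilon>/2" using d1(2) x y by simp
      have b: "dY (g x) y \<le> \<epsilon>/2" using d2(2) x y by simp
      have "dY (f x) (g x) \<le> dY (f x) y + dY y (g x)" using MY.triangle fx gx y(1) by blast
      then show ?thesis using a b MY.commute[of y "g x"] by linarith
    qed
    then show "f x = g x" using zero_le[OF fx gx] by simp
  qed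
  show ?thesis using part1 part2 part3 by blast
qed

end
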